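(* Let $m$ be a positive integer divisible by $3$, and for $z\in\{0,1\}$ let $\mathcal G_z$ be the uniform distribution over $\textsc{GapMaj}_m^{-1}(z)$. For every conjunction $C\colon\{0,1\}^m\to\{0,1\}$ of width $w\le m/7$ and each $z\in\{0,1\}$, $C(\mathcal G_z)\le 3^w\cdot C(\mathcal G_{1-z})$.
   Context: $\textsc{GapMaj}_m\colon\{0,1\}^m\to\{0,1\}$ is the partial function with value $0$ on inputs of Hamming weight $m/3$ and value $1$ on inputs of Hamming weight $2m/3$ (undefined otherwise). A conjunction is an AND of literals; its width is its number of literals. For a conjunction $C$ and distribution $\mathcal D$, $C(\mathcal D)=\Pr_{x\sim\mathcal D}[C(x)=1]$. *)

theory Defs
  imports "HOL-Probability.Probability"
begin

text \<open>Inputs in {0,1}^m are boolean lists of length m (True = 1).\<close>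

definition hweight :: "bool list \<Rightarrow> nat" where
  "hweight x = length (filter id x)"

definition gapmaj :: "nat \<Rightarrow> bool list \<Rightarrow> bool option" where
  "gapmaj m x =
     (if 3 * hweight x = m then Some False
      else if 3 * hweight x = 2 * m then Some True
      else None)"

definition G :: "nat \<Rightarrow> bool \<Rightarrow> bool list pmf" where
  "G m z = pmf_of_set {x. length x = m \<and> gapmaj m x = Some z}"

text \<open>A conjunction is a set of literals (i, b), meaning x_i = b;
  its width is the number of literals.\<close>
definition conj_eval :: "(nat \<times> bool) set \<Rightarrow> bool list \<Rightarrow> bool" where
  "conj_eval L x = (\<forall>(i, b) \<in> L. x ! i = b)"

definition width :: "(nat \<times> bool) set \<Rightarrow> nat" where
  "width L = card L"

definition acc :: "(nat \<times> bool) set \<Rightarrow> bool list pmf \<Rightarrow> real" where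
  "acc L D = measure_pmf.prob D {x. conj_eval L x}"

end

theory Submission imports Defs begin

lemma binom_step: "Suc d * (M choose Suc d) = (M - d) * (M choose d)"
  using binomial_absorption[of d M] binomial_absorb_comp[of M d] by simp

lemma binom_Q: "(\<forall>i<d. M - i \<le> 3*(P - i)) \<Longrightarrow> M choose d \<le> 3^d * (P choose d)"
proof (induction d)
  case 0 then show ?case by simp
next
  case (Suc d)
  have ih: "M choose d \<le> 3^d * (P choose d)" using Suc by simp
  have c: "M - d \<le> 3*(P - d)" using Suc.prems by simp
  have "Suc d * (M choose Suc d) = (M - d) * (M choose d)" by (rule binom_step)
  also have "\<dots> \<le> (3*(P - d)) * (3^d * (P choose d))" by (rule mult_le_mono[OF c ih]) 
  also have "\<dots> = 3^Suc d * ((P - d) * (P choose d))" by simp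
  also have "\<dots> = Suc d * (3^Suc d * (P choose Suc d))" using binom_step[of d P] by (metis mult.assoc mult.left_commute)
  finally show ?case by (metis mult_le_cancel1 zero_less_Suc)
qed

lemma binom_core:
  fixes a b k w n :: nat
  assumes "a + b = w" "7*w \<le> 3*k" "n = 3*k - w"
  shows "n choose (k - a) \<le> 3^w * (n choose (k - b))"
proof (cases "a \<le> b")
  case True
  define d where "d = b - a"
  define j where "j = k - b"
  have wk: "w \<le> k" using assms by simp
  have jd: "k - a = j + d" using True wk assms(1) unfolding d_def j_def by simp
  have "(n choose (j+d)) * ((j+d) choose j) = (n choose j) * ((n - j) choose d)"
    using choose_mult[of j "j+d" n] assms wk unfolding j_def d_def by simp
  moreover have "(n - j) choose d \<le> 3^d * ((j+d) choose d)"
    by (rule binom_Q) (use assms wk True in \<open>auto simp: j_def d_def\<close>)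
  ultimately have "(n choose (j+d)) * ((j+d) choose d) \<le> (3^d * (n choose j)) * ((j+d) choose d)"
    by (metis binomial_symmetric le_add1 add_diff_cancel_left' mult.assoc mult.left_commute mult_le_mono2)
  then have "n choose (j+d) \<le> 3^d * (n choose j)" by simp
  also have "\<dots> \<le> 3^w * (n choose j)"
    using assms(1) unfolding d_def by (intro mult_le_mono1 power_increasing) auto
  finally show ?thesis using jd j_def by simp
next
  case False
  have "n choose (k - a) \<le> n choose (k - b)"
    by (rule binomial_mono) (use assms False in auto)
  also have "\<dots> \<le> 3^w * (n choose (k - b))" by simp
  finally show ?thesis .
qed
definition blist :: "nat \<Rightarrow> nat set \<Rightarrow> bool list" where
  "blist m T = map (\<lambda>i. i \<in> T) [0..<m]"

lemma bij_count:
  "card {x. length x = m \<and> P x} = card {T. T \<subseteq> {0..<m} \<and> P (blist m T)}"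
proof -
  have eq: "{x. length x = m \<and> P x} = blist m ` {T. T \<subseteq> {0..<m} \<and> P (blist m T)}"
  proof (rule set_eqI, rule iffI)
    fix x assume x: "x \<in> {x. length x = m \<and> P x}"
    then have "x = blist m {i. i<m \<and> x!i}" unfolding blist_def by (auto intro: nth_equalityI)
    then show "x \<in> blist m ` {T. T \<subseteq> {0..<m} \<and> P (blist m T)}"
      using x by (intro rev_image_eqI[of "{i. i<m \<and> x!i}"]) auto
  qed (auto simp: blist_def)
  have inj: "inj_on (blist m) {T. T \<subseteq> {0..<m} \<and> P (blist m T)}"
  proof (rule inj_onI)
    fix T T' assume "T \<in> {T. T \<subseteq> {0..<m} \<and> P (blist m T)}" "T' \<in> {T. T \<subseteq> {0..<m} \<and> P (blist m T)}"
      "blist m T = blist m T'"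
    then show "T = T'" unfolding blist_def map_eq_conv by auto
  qed
  show ?thesis unfolding eq using card_image[OF inj] .
qed

lemma hweight_blist: "T \<subseteq> {0..<m} \<Longrightarrow> hweight (blist m T) = card T"
  unfolding hweight_def blist_def length_filter_conv_card
  by (auto intro!: arg_cong[where f=card])

lemma conj_blist:
  assumes "L \<subseteq> {0..<m} \<times> UNIV"
  shows "conj_eval L (blist m T) \<longleftrightarrow> {i. (i,True) \<in> L} \<subseteq> T \<and> {i. (i,False) \<in> L} \<inter> T = {}"
proof -
  have "conj_eval L (blist m T) \<longleftrightarrow> (\<forall>(i,b)\<in>L. (i \<in> T) = b)"
  proof -
    have h: "\<And>p. p \<in> L \<Longrightarrow> blist m T ! fst p = (fst p \<in> T)" using assms by (auto simp: blist_def)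
    show ?thesis unfolding conj_eval_def split_beta using h by simp
  qed
  also have "\<dots> \<longleftrightarrow> {i. (i,True) \<in> L} \<subseteq> T \<and> {i. (i,False) \<in> L} \<inter> T = {}"
    by (auto simp: split_beta)
  finally show ?thesis .
qed

lemma sub_count:
  assumes "finite R" "S1 \<inter> R = {}" "finite S1"
  shows "card {T. T \<subseteq> R \<union> S1 \<and> S1 \<subseteq> T \<and> card T = card S1 + j} = card R choose j"
proof -
  have eq: "{T. T \<subseteq> R \<union> S1 \<and> S1 \<subseteq> T \<and> card T = card S1 + j} = (\<lambda>U. U \<union> S1) ` {U. U \<subseteq> R \<and> card U = j}"
  proof (rule set_eqI, rule iffI)
    fix T assume T: "T \<in> {T. T \<subseteq> R \<union> S1 \<and> S1 \<subseteq> T \<and> card T = card S1 + j}"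
    have fT: "finite T" using T assms finite_subset by auto
    have "card (T - S1) = j" using T fT assms by (simp add: card_Diff_subset)
    then show "T \<in> (\<lambda>U. U \<union> S1) ` {U. U \<subseteq> R \<and> card U = j}"
      using T by (intro rev_image_eqI[of "T - S1"]) auto
  next
    fix T assume "T \<in> (\<lambda>U. U \<union> S1) ` {U. U \<subseteq> R \<and> card U = j}"
    then obtain U where U: "U \<subseteq> R" "card U = j" "T = U \<union> S1" by auto
    have "card T = card U + card S1" using U assms
      by (metis card_Un_disjoint disjoint_iff_not_equal finite_subset subset_eq)
    then show "T \<in> {T. T \<subseteq> R \<union> S1 \<and> S1 \<subseteq> T \<and> card T = card S1 + j}" using U by auto
  qed
  have inj: "inj_on (\<lambda>U. U \<union> S1) {U. U \<subseteq> R \<and> card U = j}"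
    by (rule inj_onI) (use assms in blast)
  show ?thesis unfolding eq card_image[OF inj] by (rule n_subsets[OF assms(1)])
qed

theorem fact2p2:
  fixes m :: nat and L :: "(nat \<times> bool) set" and z :: bool
  assumes "m > 0" and "3 dvd m"
    and "L \<subseteq> {0..<m} \<times> UNIV"
    and "real (width L) \<le> real m / 7"
  shows "acc L (G m z) \<le> 3 ^ width L * acc L (G m (\<not> z))"
proof -
  obtain k where m: "m = 3*k" using assms(2) by blast
  have k0: "k > 0" using assms(1) m by simp
  define S1 where "S1 = {i. (i,True) \<in> L}"
  define S0 where "S0 = {i. (i,False) \<in> L}"
  have S1m: "S1 \<subseteq> {0..<m}" and S0m: "S0 \<subseteq> {0..<m}" using assms(3) unfolding S1_def S0_def by auto
  have fS1: "finite S1" and fS0: "finite S0" using S1m S0m finite_subset by auto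
  show ?thesis
  proof (cases "S1 \<inter> S0 = {}")
    case False
    then obtain i where "(i,True) \<in> L" "(i,False) \<in> L" unfolding S1_def S0_def by auto
    note ii = this
    have "\<not> conj_eval L x" for x
    proof
      assume "conj_eval L x"
      then have h: "\<And>p. p \<in> L \<Longrightarrow> x ! fst p = snd p" unfolding conj_eval_def split_beta by blast
      show False using h[OF ii(1)] h[OF ii(2)] by simp
    qed
    then have "{x. conj_eval L x} = {}" by blast
    then have "\<And>D. acc L D = 0" unfolding acc_def by (simp only:) simp
    then show ?thesis by simp
  next
    case True
    have Leq: "L = (\<lambda>i. (i,True)) ` S1 \<union> (\<lambda>i. (i,False)) ` S0"
    proof -
      have "p \<in> L \<longleftrightarrow> p \<in> (\<lambda>i. (i,True)) ` S1 \<union> (\<lambda>i. (i,False)) ` S0" for p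
      proof (cases p)
        case (Pair i c)
        then show ?thesis by (cases c) (auto simp: S1_def S0_def)
      qed
      then show ?thesis by blast
    qed
    have wL: "width L = card S1 + card S0"
    proof -
      have d: "(\<lambda>i. (i,True)) ` S1 \<inter> (\<lambda>i. (i,False)) ` S0 = {}" by auto
      have i1: "inj (\<lambda>i. (i,True))" and i2: "inj (\<lambda>i. (i,False))" by (auto simp: inj_on_def)
      have c1: "card ((\<lambda>i. (i,True)) ` S1) = card S1" by (rule card_image[OF inj_on_subset[OF i1 subset_UNIV]])
      have c2: "card ((\<lambda>i. (i,False)) ` S0) = card S0" by (rule card_image[OF inj_on_subset[OF i2 subset_UNIV]])
      have e: "card ((\<lambda>i. (i,True)) ` S1 \<union> (\<lambda>i. (i,False)) ` S0) = card S1 + card S0"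
        using card_Un_disjoint[OF finite_imageI[OF fS1] finite_imageI[OF fS0] d] c1 c2 by linarith
      show ?thesis unfolding width_def by (subst Leq) (rule e)
    qed
    define a where "a = card S1"
    define b where "b = card S0"
    define w where "w = width L"
    have wab: "a + b = w" unfolding a_def b_def w_def wL ..
    have w7: "7*w \<le> 3*k" using assms(4) m unfolding w_def by simp
    define R where "R = {0..<m} - (S1 \<union> S0)"
    have cR: "card R = m - w"
    proof -
      have "S1 \<union> S0 \<subseteq> {0..<m}" using S1m S0m by blast
      then show ?thesis using card_Diff_subset[OF finite_UnI[OF fS1 fS0]] card_Un_disjoint[OF fS1 fS0 True]
        by (simp add: R_def wL w_def)
    qed
    have fR: "finite R" unfolding R_def by simp
    define n where "n = m - w"
    have cnt: "card {x. length x = m \<and> (hweight x = h \<and> conj_eval L x)} = n choose (h - a)"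
      if "a \<le> h" for h
    proof -
      have "{T. T \<subseteq> {0..<m} \<and> (hweight (blist m T) = h \<and> conj_eval L (blist m T))}
          = {T. T \<subseteq> R \<union> S1 \<and> S1 \<subseteq> T \<and> card T = card S1 + (h - a)}"
      proof (rule set_eqI)
        fix T
        show "T \<in> {T. T \<subseteq> {0..<m} \<and> (hweight (blist m T) = h \<and> conj_eval L (blist m T))}
          \<longleftrightarrow> T \<in> {T. T \<subseteq> R \<union> S1 \<and> S1 \<subseteq> T \<and> card T = card S1 + (h - a)}"
        proof (cases "T \<subseteq> {0..<m}")
          case Tm: True
          show ?thesis using that S1m S0m \<open>S1 \<inter> S0 = {}\<close>
            using Tm by (simp add: hweight_blist[OF Tm] conj_blist[OF assms(3)] S1_def[symmetric] S0_def[symmetric] a_def)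
              (auto simp: R_def)
        next
          case Tm: False
          show ?thesis using S1m Tm by (auto simp: R_def)
        qed
      qed
      then show ?thesis unfolding bij_count n_def cR[symmetric]
        using sub_count[OF fR _ fS1, of "h - a"] R_def by auto
    qed
    have tot: "card {x. length x = m \<and> hweight x = h} = m choose h" for h
    proof -
      have "{T. T \<subseteq> {0..<m} \<and> hweight (blist m T) = h} = {T. T \<subseteq> {0..<m} \<and> card T = h}"
        by (auto simp: hweight_blist)
      then show ?thesis unfolding bij_count using n_subsets[of "{0..<m}" h] by simp
    qed
    have pr: "acc L (pmf_of_set {x. length x = m \<and> hweight x = h}) = real (n choose (h - a)) / real (m choose h)"
      if "a \<le> h" "h \<le> m" for h
    proof -
      let ?A = "{x. length x = m \<and> hweight x = h}"
      have fA: "finite ?A"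
        by (rule finite_subset[OF _ finite_lists_length_eq[of UNIV m]]) auto
      have "card ?A > 0" unfolding tot using that by simp
      then have ne: "?A \<noteq> {}" by (metis card.empty less_irrefl)
      have ie: "?A \<inter> {x. conj_eval L x} = {x. length x = m \<and> (hweight x = h \<and> conj_eval L x)}" by auto
      show ?thesis unfolding acc_def measure_pmf_of_set[OF ne fA] ie
        by (simp only: tot cnt[OF that(1)])
    qed
    have G0: "G m False = pmf_of_set {x. length x = m \<and> hweight x = k}"
      unfolding G_def gapmaj_def m by (rule arg_cong[where f=pmf_of_set]) auto
    have G1: "G m True = pmf_of_set {x. length x = m \<and> hweight x = 2*k}"
      unfolding G_def gapmaj_def m using k0 by (intro arg_cong[where f=pmf_of_set]) auto
    have aw: "a \<le> w" "b \<le> w" using wab by auto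
    have A0: "acc L (G m False) = real (n choose (k - a)) / real (m choose k)"
      unfolding G0 by (rule pr) (use aw w7 m in auto)
    have mk: "m choose (2*k) = m choose k" using binomial_symmetric[of k m] m by simp
    have nsym: "n choose (2*k - a) = n choose (k - b)"
    proof -
      have e1: "2*k - a \<le> n" and e2: "n - (2*k - a) = k - b" using aw w7 wab unfolding n_def m by auto
      show ?thesis using binomial_symmetric[OF e1] e2 by simp
    qed
    have A1: "acc L (G m True) = real (n choose (k - b)) / real (m choose k)"
      unfolding G1 using pr[of "2*k"] aw w7 m mk nsym by simp
    have n3: "n = 3*k - w" unfolding n_def m ..
    have c1: "real (n choose (k - a)) \<le> 3^w * real (n choose (k - b))"
      using binom_core[OF wab w7 n3] by (metis of_nat_le_iff of_nat_mult of_nat_numeral of_nat_power)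
    have wba: "b + a = w" using wab by simp
    have c2: "real (n choose (k - b)) \<le> 3^w * real (n choose (k - a))"
      using binom_core[OF wba w7 n3] by (metis of_nat_le_iff of_nat_mult of_nat_numeral of_nat_power)
    have pos: "real (m choose k) > 0" using m by simp
    show ?thesis
    proof (cases z)
      case True
      have "real (n choose (k-b)) / real (m choose k) \<le> (3^w * real (n choose (k-a))) / real (m choose k)"
        by (rule divide_right_mono[OF c2]) (use pos in simp)
      then show ?thesis using True A0 A1 w_def by simp
    next
      case False
      have "real (n choose (k-a)) / real (m choose k) \<le> (3^w * real (n choose (k-b))) / real (m choose k)"
        by (rule divide_right_mono[OF c1]) (use pos in simp)
      then show ?thesis using False A0 A1 w_def by simp
    qed
  qed
qed

end
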